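(* Let $K$ be a fan-like sphere with vertex set $[m]$, and let $\Sigma$ be a complete fan over $\operatorname{wed}_1(K)$, whose vertex set is $\{0,1,\dots,m\}$ (where $0$ and $1$ denote the two new vertices created from the vertex $1$ of $K$). Choose a nonzero point $x_i$ on each 1-cone of $\Sigma$ corresponding to $i\in\{0,\dots,m\}$, and let $\widehat X=(\widehat x_0,\widehat x_1,\dots,\widehat x_m)$ be a Shephard diagram for $\Sigma$ with respect to $X=(x_0,\dots,x_m)$. Then $(\widehat x_1,\widehat x_2,\dots,\widehat x_m)$ and $(\widehat x_0,\widehat x_2,\dots,\widehat x_m)$ are Shephard diagrams for the projected fans $\operatorname{proj}_0\Sigma$ and $\operatorname{proj}_1\Sigma$ respectively (with respect to the images of the corresponding points $x_j$ in the quotient spaces). Furthermore \[S(\Sigma,\widehat X)=S(\operatorname{proj}_0\Sigma,(\widehat x_1,\dots,\widehat x_m))\cap S(\operatorname{proj}_1\Sigma,(\widehat x_0,\widehat x_2,\dots,\widehat x_m)).\]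
   Context: Simplicial wedge: $\operatorname{wed}_v(K)=(I\star\operatorname{link}_K\{v\})\cup(\partial I\star(K\setminus\{v\}))$, $I$ a 1-simplex on two new vertices, $\partial I$ its 0-skeleton, $\star$ the join, $K\setminus\{v\}$ the induced subcomplex on the other vertices. A fan-like sphere is a simplicial $(n-1)$-sphere underlying a complete simplicial fan in $\mathbb{R}^n$. Fans are simplicial; a fan over a complex $L$ has its 1-cones indexed by the vertices of $L$ and cones spanned by faces; it is complete if its cones cover $\mathbb{R}^n$. For a cone $\sigma$ of $\Sigma$, the projected fan $\operatorname{proj}_\sigma\Sigma$ is the fan in $\mathbb{R}^n/\operatorname{span}\sigma$ formed by the images of the cones of $\Sigma$ containing $\sigma$ (here $\operatorname{proj}_i$ means projection with respect to the 1-cone of vertex $i$). Linear transform: for a sequence $X=(x_1,\dots,x_m)$ spanning $\mathbb{R}^n$, write a basis of $\{\alpha\in\mathbb{R}^m:\sum\alpha_ix_i=0\}$ as the rows of an $(m-n)\times m$ matrix; its columns $\overline X=(\overline x_1,\dots,\overline x_m)$ form a linear transform of $X$. If $X$ positively spans $\mathbb{R}^n$, then $\operatorname{pos}\overline X$ is a strongly convex cone; choose a hyperplane $H$ not through $0$ meeting each ray $\{a\overline x_i:a>0\}$, at a point $\widehat x_i$; $\widehat X=(\widehat x_1,\dots,\widehat x_m)$ is a Shephard diagram of $X$. For a complete fan $\Sigma$ and points $x_i$ on its 1-cones, this is a Shephard diagram for $\Sigma$. A subsequence $Y$ of $X$ is a coface of $\Sigma$ if $\operatorname{pos}(X\setminus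 Y)$ is a cone of $\Sigma$; $\widehat X|_Y$ denotes the corresponding subsequence of $\widehat X$, and $S(\Sigma,\widehat X)=\bigcap_{Y\text{ coface of }\Sigma}\operatorname{relint}\operatorname{conv}\widehat X|_Y$. *)

theory Defs
  imports "HOL-Analysis.Analysis"
begin

definition simplicial_complex :: "'v set set \<Rightarrow> 'v set \<Rightarrow> bool" where
  "simplicial_complex K V \<longleftrightarrow>
     (\<forall>\<sigma>\<in>K. finite \<sigma> \<and> \<sigma> \<subseteq> V) \<and>
     (\<forall>\<sigma>\<in>K. \<forall>\<tau>. \<tau> \<subseteq> \<sigma> \<longrightarrow> \<tau> \<in> K) \<and>
     (\<forall>v\<in>V. {v} \<in> K)"

definition sc_join :: "'v set set \<Rightarrow> 'v set set \<Rightarrow> 'v set set" where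
  "sc_join A B = {\<sigma> \<union> \<tau> | \<sigma> \<tau>. \<sigma> \<in> A \<and> \<tau> \<in> B}"

definition sc_link :: "'v set set \<Rightarrow> 'v \<Rightarrow> 'v set set" where
  "sc_link K v = {\<tau> \<in> K. v \<notin> \<tau> \<and> insert v \<tau> \<in> K}"

definition sc_delete :: "'v set set \<Rightarrow> 'v \<Rightarrow> 'v set set" where
  "sc_delete K v = {\<tau> \<in> K. v \<notin> \<tau>}"

definition edge_simplex :: "'v \<Rightarrow> 'v \<Rightarrow> 'v set set" where
  "edge_simplex a b = Pow {a, b}"

definition edge_boundary :: "'v \<Rightarrow> 'v \<Rightarrow> 'v set set" where
  "edge_boundary a b = {A \<in> Pow {a, b}. card A \<le> 1}"

text \<open>wed_v(K) = (I * link_K{v}) \<union> (\<partial>I * (K \ {v})), I the 1-simplex on new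
  vertices a, b.\<close>
definition wedge :: "'v set set \<Rightarrow> 'v \<Rightarrow> 'v \<Rightarrow> 'v \<Rightarrow> 'v set set" where
  "wedge K v a b =
     sc_join (edge_simplex a b) (sc_link K v) \<union> sc_join (edge_boundary a b) (sc_delete K v)"

definition pos :: "('i \<Rightarrow> 'a::real_vector) \<Rightarrow> 'i set \<Rightarrow> 'a set" where
  "pos X J = {(\<Sum>j\<in>J. c j *\<^sub>R X j) | c. \<forall>j\<in>J. 0 \<le> c j}"

definition fan_cones :: "'v set set \<Rightarrow> ('v \<Rightarrow> 'a::real_vector) \<Rightarrow> 'a set set" where
  "fan_cones L y = (\<lambda>\<sigma>. pos y \<sigma>) ` L"

definition complete_fan :: "'v set set \<Rightarrow> 'v set \<Rightarrow> ('v \<Rightarrow> 'a::euclidean_space) \<Rightarrow> bool" where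
  "complete_fan L V y \<longleftrightarrow>
     simplicial_complex L V \<and>
     (\<forall>\<sigma>\<in>L. inj_on y \<sigma> \<and> independent (y ` \<sigma>)) \<and>
     (\<forall>\<sigma>\<in>L. \<forall>\<tau>\<in>L. pos y \<sigma> \<inter> pos y \<tau> = pos y (\<sigma> \<inter> \<tau>)) \<and>
     \<Union> (fan_cones L y) = UNIV"

definition fan_like_sphere :: "'a::euclidean_space itself \<Rightarrow> 'v set set \<Rightarrow> 'v set \<Rightarrow> bool" where
  "fan_like_sphere T K V \<longleftrightarrow> simplicial_complex K V \<and> (\<exists>y :: 'v \<Rightarrow> 'a. complete_fan K V y)"

text \<open>Projected fan w.r.t. the 1-cone of vertex i: images under the quotient map
  p (a linear surjection with kernel span{y i}) of the cones containing that 1-cone.\<close>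
definition proj_cones :: "('a \<Rightarrow> 'b) \<Rightarrow> 'a::real_vector set set \<Rightarrow> 'a set \<Rightarrow> 'b set set" where
  "proj_cones p Cs \<rho> = {p ` C | C. C \<in> Cs \<and> \<rho> \<subseteq> C}"

definition quotient_map_by :: "('a::real_vector \<Rightarrow> 'b::real_vector) \<Rightarrow> 'a \<Rightarrow> bool" where
  "quotient_map_by p v \<longleftrightarrow> linear p \<and> surj p \<and> {w. p w = 0} = span {v}"

text \<open>Space of linear dependencies of X (indexed by I), coefficients read on I.\<close>
definition dependencies :: "('i \<Rightarrow> 'a::real_vector) \<Rightarrow> 'i set \<Rightarrow> ('i \<Rightarrow> real) set" where
  "dependencies X I = {\<alpha>. (\<Sum>i\<in>I. \<alpha> i *\<^sub>R X i) = 0}"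

text \<open>Xb is a linear transform of X: there is a basis (b r), r ranging over the standard
  basis of 'c, of the dependency space, written as the rows of a matrix, and Xb i is the
  i-th column of that matrix.\<close>
definition linear_transform ::
  "('i \<Rightarrow> 'a::euclidean_space) \<Rightarrow> 'i set \<Rightarrow> ('i \<Rightarrow> 'c::euclidean_space) \<Rightarrow> bool" where
  "linear_transform X I Xb \<longleftrightarrow> finite I \<and> span (X ` I) = UNIV \<and>
     (\<exists>b :: 'c \<Rightarrow> 'i \<Rightarrow> real.
        (\<forall>r\<in>Basis. b r \<in> dependencies X I) \<and>
        (\<forall>c :: 'c \<Rightarrow> real. (\<forall>i\<in>I. (\<Sum>r\<in>Basis. c r * b r i) = 0) \<longrightarrow> (\<forall>r\<in>Basis. c r = 0)) \<and>
        (\<forall>\<alpha>\<in>dependencies X I. \<exists>c :: 'c \<Rightarrow> real. \<forall>i\<in>I. \<alpha> i = (\<Sum>r\<in>Basis. c r * b r i)) \<and>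
        (\<forall>i\<in>I. Xb i = (\<Sum>r\<in>Basis. b r i *\<^sub>R r)))"

text \<open>Xh is a Shephard diagram of X: X positively spans, and for some linear transform Xb
  of X there is an affine hyperplane H = {z. u . z = d} not through 0 meeting each open
  ray through Xb i, at the point Xh i.\<close>
definition shephard_diagram ::
  "('i \<Rightarrow> 'a::euclidean_space) \<Rightarrow> 'i set \<Rightarrow> ('i \<Rightarrow> 'c::euclidean_space) \<Rightarrow> bool" where
  "shephard_diagram X I Xh \<longleftrightarrow> finite I \<and> pos X I = UNIV \<and>
     (\<exists>Xb. linear_transform X I Xb \<and>
        (\<exists>u d. u \<noteq> 0 \<and> d \<noteq> 0 \<and>
           (\<forall>i\<in>I. inner u (Xh i) = d \<and> (\<exists>a>0. Xh i = a *\<^sub>R Xb i))))"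

definition shephard_diagram_for_fan ::
  "'a::euclidean_space set set \<Rightarrow> 'i set \<Rightarrow> ('i \<Rightarrow> 'a) \<Rightarrow> ('i \<Rightarrow> 'c::euclidean_space) \<Rightarrow> bool" where
  "shephard_diagram_for_fan Cs I X Xh \<longleftrightarrow>
     \<Union> Cs = UNIV \<and> (\<forall>i\<in>I. X i \<noteq> 0 \<and> pos X {i} \<in> Cs) \<and> shephard_diagram X I Xh"

text \<open>S(Sigma, Xh): intersection of relint conv Xh|Y over all cofaces Y of the fan.\<close>
definition S_set ::
  "'a::real_vector set set \<Rightarrow> 'i set \<Rightarrow> ('i \<Rightarrow> 'a) \<Rightarrow> ('i \<Rightarrow> 'c::euclidean_space) \<Rightarrow> 'c set" where
  "S_set Cs I X Xh =
     \<Inter> {rel_interior (convex hull (Xh ` Y)) | Y. Y \<subseteq> I \<and> pos X (I - Y) \<in> Cs}"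

end

theory Submission
  imports Defs
begin



lemma pos_iff: "z \<in> pos x J \<longleftrightarrow> (\<exists>c. z = (\<Sum>j\<in>J. c j *\<^sub>R x j) \<and> (\<forall>j\<in>J. 0 \<le> c j))"
  unfolding pos_def by auto

lemma posI: "z = (\<Sum>j\<in>J. c j *\<^sub>R x j) \<Longrightarrow> (\<And>j. j\<in>J \<Longrightarrow> 0 \<le> c j) \<Longrightarrow> z \<in> pos x J"
  unfolding pos_iff by blast

lemma if_scaleR0: "(if P then a else 0) *\<^sub>R v = (if P then a *\<^sub>R v else (0::'a::real_vector))"
  by simp

lemma sum_restrict_scale: fixes x :: "'i \<Rightarrow> 'a::real_vector" shows "finite J \<Longrightarrow> (\<Sum>i\<in>J. (if i \<in> A then c i else 0) *\<^sub>R x i) = (\<Sum>i\<in>J \<inter> A. c i *\<^sub>R x i)"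
proof -
  assume f: "finite J"
  have "(\<Sum>i\<in>J. (if i \<in> A then c i else 0) *\<^sub>R x i) = (\<Sum>i\<in>J. if i \<in> A then c i *\<^sub>R x i else 0)"
    by (rule sum.cong) auto
  also have "\<dots> = (\<Sum>i\<in>J \<inter> A. c i *\<^sub>R x i)" using f by (simp add: sum.inter_restrict)
  finally show ?thesis .
qed

lemma pos_zero: "0 \<in> pos x J"
  by (rule posI[where c="\<lambda>_. 0"]) auto

lemma pos_mem: "finite J \<Longrightarrow> j \<in> J \<Longrightarrow> x j \<in> pos x J"
  by (rule posI[where c="\<lambda>i. if i = j then 1 else 0"]) (auto simp: if_scaleR0)

lemma pos_scale: "z \<in> pos x J \<Longrightarrow> 0 \<le> a \<Longrightarrow> a *\<^sub>R z \<in> pos x J"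
  unfolding pos_iff
  apply clarify
  subgoal for c
    by (rule exI[of _ "\<lambda>i. a * c i"]) (auto simp: scaleR_sum_right)
  done

lemma pos_add: "z \<in> pos x J \<Longrightarrow> w \<in> pos x J \<Longrightarrow> z + w \<in> pos x J"
  unfolding pos_iff
  apply clarify
  subgoal for c d
    by (rule exI[of _ "\<lambda>i. c i + d i"]) (auto simp: scaleR_add_left sum.distrib)
  done

lemma pos_mono: "J \<subseteq> J' \<Longrightarrow> finite J' \<Longrightarrow> pos x J \<subseteq> pos x J'"
  unfolding pos_def
  apply clarify
  subgoal for _ c
    apply (rule exI[of _ "\<lambda>i. if i \<in> J then c i else 0"])
    apply (auto simp: sum_restrict_scale Int_absorb1)
    done
  done

lemma pos_single: "pos x {v} = {a *\<^sub>R x v | a. a \<ge> 0}"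
  unfolding pos_def by auto

lemma pos_eq_hull: "finite J \<Longrightarrow> pos x J = convex_cone hull (x ` J)"
proof
  assume f: "finite J"
  show "pos x J \<subseteq> convex_cone hull (x ` J)"
  proof
    fix z assume "z \<in> pos x J"
    then obtain c where z: "z = (\<Sum>j\<in>J. c j *\<^sub>R x j)" and c: "\<forall>j\<in>J. 0 \<le> c j"
      unfolding pos_iff by blast
    have "\<And>J'. J' \<subseteq> J \<Longrightarrow> (\<Sum>j\<in>J'. c j *\<^sub>R x j) \<in> convex_cone hull (x ` J)"
    proof -
      fix J' assume "J' \<subseteq> J"
      then have "finite J'" using f by (rule finite_subset)
      then show "(\<Sum>j\<in>J'. c j *\<^sub>R x j) \<in> convex_cone hull (x ` J)"
        using \<open>J' \<subseteq> J\<close>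
      proof (induction J' rule: finite_induct)
        case empty then show ?case by (simp add: convex_cone_hull_contains_0)
        next
        case (insert a F)
        have xa: "x a \<in> convex_cone hull (x ` J)" by (rule hull_inc) (use insert in auto)
        have 1: "c a *\<^sub>R x a \<in> convex_cone hull (x ` J)"
          by (rule convex_cone_scaleR[OF convex_cone_convex_cone_hull _ xa]) (use insert c in auto)
        have 2: "(\<Sum>j\<in>F. c j *\<^sub>R x j) \<in> convex_cone hull (x ` J)"
          using insert by blast
        have "(\<Sum>j\<in>insert a F. c j *\<^sub>R x j) = c a *\<^sub>R x a + (\<Sum>j\<in>F. c j *\<^sub>R x j)"
          using insert(1,2) by (rule sum.insert)
        then show ?case using convex_cone_add[OF convex_cone_convex_cone_hull 1 2] by simp
      qed
    qed
    then show "z \<in> convex_cone hull (x ` J)" using z by blast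
  qed
  have "convex_cone (pos x J)"
    unfolding convex_cone_iff
  proof (intro conjI ballI allI impI)
    show "0 \<in> pos x J" by (rule pos_zero)
    show "a + b \<in> pos x J" if "a \<in> pos x J" "b \<in> pos x J" for a b using that by (rule pos_add)
    show "c *\<^sub>R a \<in> pos x J" if "a \<in> pos x J" "0 \<le> c" for a c using that by (rule pos_scale)
  qed
  moreover have "x ` J \<subseteq> pos x J" by (auto intro: pos_mem[OF f])
  ultimately show "convex_cone hull (x ` J) \<subseteq> pos x J"
    by (rule hull_minimal[rotated])
qed

lemma pos_closed: "finite J \<Longrightarrow> closed (pos (x :: _ \<Rightarrow> 'a::euclidean_space) J)"
  by (simp add: pos_eq_hull closed_convex_cone_hull)

lemma pos_image: "linear p \<Longrightarrow> p ` pos x J = pos (p \<circ> x) J"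
proof -
  assume p: "linear p"
  have e: "p (\<Sum>j\<in>J. c j *\<^sub>R x j) = (\<Sum>j\<in>J. c j *\<^sub>R (p \<circ> x) j)" for c
    using p by (simp add: linear_sum linear_scale)
  show ?thesis
  proof
    show "p ` pos x J \<subseteq> pos (p \<circ> x) J"
    proof
      fix z assume "z \<in> p ` pos x J"
      then obtain y where "y \<in> pos x J" "z = p y" by auto
      then obtain c where "z = p (\<Sum>j\<in>J. c j *\<^sub>R x j)" "\<forall>j\<in>J. 0 \<le> c j" unfolding pos_iff by auto
      then show "z \<in> pos (p \<circ> x) J" by (intro posI[where c=c]) (simp_all add: e)
    qed
    show "pos (p \<circ> x) J \<subseteq> p ` pos x J"
    proof
      fix z assume "z \<in> pos (p \<circ> x) J"
      then obtain c where c: "z = (\<Sum>j\<in>J. c j *\<^sub>R (p \<circ> x) j)" "\<forall>j\<in>J. 0 \<le> c j" unfolding pos_iff by blast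
      have "(\<Sum>j\<in>J. c j *\<^sub>R x j) \<in> pos x J" by (rule posI[where c=c]) (use c in auto)
      moreover have "z = p (\<Sum>j\<in>J. c j *\<^sub>R x j)" using c e by simp
      ultimately show "z \<in> p ` pos x J" by blast
    qed
  qed
qed

lemma pos_drop_zero: "y v = 0 \<Longrightarrow> finite J \<Longrightarrow> pos y J = pos y (J - {v})"
proof -
  assume y: "y v = 0" and f: "finite J"
  have e: "(\<Sum>j\<in>J. c j *\<^sub>R y j) = (\<Sum>j\<in>J-{v}. c j *\<^sub>R y j)" for c
    using y f by (cases "v \<in> J") (simp_all add: sum.remove)
  show ?thesis
  proof
    show "pos y J \<subseteq> pos y (J - {v})"
    proof
      fix z assume "z \<in> pos y J"
      then obtain c where "z = (\<Sum>j\<in>J. c j *\<^sub>R y j)" "\<forall>j\<in>J. 0 \<le> c j" unfolding pos_iff by blast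
      then show "z \<in> pos y (J-{v})" by (intro posI[where c=c]) (simp_all add: e)
    qed
    show "pos y (J - {v}) \<subseteq> pos y J"
    proof
      fix z assume "z \<in> pos y (J - {v})"
      then obtain c where z: "z = (\<Sum>j\<in>J-{v}. c j *\<^sub>R y j)" "\<forall>j\<in>J-{v}. 0 \<le> c j" unfolding pos_iff by blast
      let ?c = "\<lambda>j. if j = v then 0 else c j"
      have "z = (\<Sum>j\<in>J-{v}. ?c j *\<^sub>R y j)" using z by (auto intro: sum.cong)
      then have "z = (\<Sum>j\<in>J. ?c j *\<^sub>R y j)" using e by simp
      then show "z \<in> pos y J" by (rule posI) (use z in auto)
    qed
  qed
qed




lemma cf_finite: "complete_fan L V x \<Longrightarrow> \<sigma> \<in> L \<Longrightarrow> finite \<sigma>"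
  by (simp add: complete_fan_def simplicial_complex_def)

lemma cf_sub: "complete_fan L V x \<Longrightarrow> \<sigma> \<in> L \<Longrightarrow> \<sigma> \<subseteq> V"
  by (simp add: complete_fan_def simplicial_complex_def)

lemma cf_single: "complete_fan L V x \<Longrightarrow> v \<in> V \<Longrightarrow> {v} \<in> L"
  by (simp add: complete_fan_def simplicial_complex_def)

lemma cf_down: "complete_fan L V x \<Longrightarrow> \<sigma> \<in> L \<Longrightarrow> \<tau> \<subseteq> \<sigma> \<Longrightarrow> \<tau> \<in> L"
  unfolding complete_fan_def simplicial_complex_def by (elim conjE) (rule mp, rule spec, erule bspec)

lemma cf_inter: "complete_fan L V x \<Longrightarrow> \<sigma> \<in> L \<Longrightarrow> \<tau> \<in> L \<Longrightarrow> pos x \<sigma> \<inter> pos x \<tau> = pos x (\<sigma> \<inter> \<tau>)"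
  by (simp add: complete_fan_def)

lemma cf_cover: "complete_fan L V x \<Longrightarrow> \<exists>\<sigma>\<in>L. z \<in> pos x \<sigma>"
  unfolding complete_fan_def fan_cones_def by (metis UNIV_I UnionE imageE)

lemma pos_empty: "pos x {} = {0}"
  unfolding pos_def by auto

lemma indep_coeffs:
  assumes cf: "complete_fan L V x" and s: "\<sigma> \<in> L"
    and sum0: "(\<Sum>i\<in>\<sigma>. a i *\<^sub>R x i) = 0" and i: "i \<in> \<sigma>"
  shows "a i = 0"
proof -
  have inj: "inj_on x \<sigma>" and ind: "independent (x ` \<sigma>)" using cf s unfolding complete_fan_def by auto
  have f: "finite \<sigma>" by (rule cf_finite[OF cf s])
  let ?u = "\<lambda>w. a (inv_into \<sigma> x w)"
  have "(\<Sum>w\<in>x ` \<sigma>. ?u w *\<^sub>R w) = (\<Sum>i\<in>\<sigma>. ?u (x i) *\<^sub>R x i)"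
    using inj by (rule sum.reindex[unfolded comp_def])
  also have "\<dots> = (\<Sum>i\<in>\<sigma>. a i *\<^sub>R x i)"
    using inj by (intro sum.cong) (auto simp: inv_into_f_f)
  finally have "(\<Sum>w\<in>x ` \<sigma>. ?u w *\<^sub>R w) = 0" using sum0 by simp
  then have "?u (x i) = 0"
    using ind f i by (intro independentD[of "x ` \<sigma>" "x ` \<sigma>" ?u]) auto
  then show ?thesis using inj i by (simp add: inv_into_f_f)
qed

lemma indep_contra:
  assumes cf: "complete_fan L V x" and s: "\<sigma> \<in> L" and k: "k \<in> \<sigma>"
    and J: "J \<subseteq> \<sigma>" "k \<notin> J"
    and e: "x k = (\<Sum>i\<in>J. c i *\<^sub>R x i)"
  shows False
proof -
  have f: "finite \<sigma>" by (rule cf_finite[OF cf s])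
  let ?a = "\<lambda>i. (if i \<in> {k} then 1 else 0) - (if i \<in> J then c i else 0)"
  have "(\<Sum>i\<in>\<sigma>. ?a i *\<^sub>R x i) = (\<Sum>i\<in>\<sigma>. (if i \<in> {k} then 1 else 0) *\<^sub>R x i) - (\<Sum>i\<in>\<sigma>. (if i \<in> J then c i else 0) *\<^sub>R x i)"
    by (simp add: scaleR_diff_left sum_subtractf)
  also have "\<dots> = (\<Sum>i\<in>\<sigma> \<inter> {k}. 1 *\<^sub>R x i) - (\<Sum>i\<in>\<sigma> \<inter> J. c i *\<^sub>R x i)"
    using f by (simp only: sum_restrict_scale)
  also have "\<sigma> \<inter> {k} = {k}" using k by auto
  also have "\<sigma> \<inter> J = J" using J by auto
  finally have "(\<Sum>i\<in>\<sigma>. ?a i *\<^sub>R x i) = 0" using e by simp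
  then have "?a k = 0" by (rule indep_coeffs[OF cf s _ k])
  then show False using J by simp
qed

lemma cf_nonzero: "complete_fan L V x \<Longrightarrow> v \<in> V \<Longrightarrow> x v \<noteq> 0"
  using indep_contra[of L V x "{v}" v "{}"] cf_single by fastforce

lemma face_sub:
  assumes cf: "complete_fan L V x" and s: "\<sigma> \<in> L" and j: "j \<in> V" and xj: "x j \<in> pos x \<sigma>"
  shows "j \<in> \<sigma>"
proof (rule ccontr)
  assume nj: "j \<notin> \<sigma>"
  have "x j \<in> pos x {j} \<inter> pos x \<sigma>" using xj pos_mem[of "{j}" j x] by auto
  also have "\<dots> = pos x ({j} \<inter> \<sigma>)" by (rule cf_inter[OF cf cf_single[OF cf j] s])
  also have "{j} \<inter> \<sigma> = {}" using nj by auto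
  finally have "x j = 0" by (simp add: pos_empty)
  then show False using cf_nonzero[OF cf j] by simp
qed

lemma face_of_pos:
  assumes cf: "complete_fan L V x" and J: "J \<subseteq> V" "finite J" and s: "\<sigma> \<in> L"
    and e: "pos x J = pos x \<sigma>"
  shows "J = \<sigma>"
proof
  show "J \<subseteq> \<sigma>"
  proof
    fix j assume "j \<in> J"
    then have "x j \<in> pos x \<sigma>" using pos_mem[OF J(2)] e by blast
    then show "j \<in> \<sigma>" using face_sub[OF cf s] J \<open>j \<in> J\<close> by blast
  qed
  show "\<sigma> \<subseteq> J"
  proof
    fix k assume k: "k \<in> \<sigma>"
    show "k \<in> J"
    proof (rule ccontr)
      assume nk: "k \<notin> J"
      have "x k \<in> pos x J" using pos_mem[OF cf_finite[OF cf s] k] e by blast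
      then obtain c where "x k = (\<Sum>i\<in>J. c i *\<^sub>R x i)" unfolding pos_iff by blast
      then show False using indep_contra[OF cf s k \<open>J \<subseteq> \<sigma>\<close> nk] by blast
    qed
  qed
qed

lemma coface_iff:
  assumes cf: "complete_fan L V x" and fV: "finite V" and Y: "Y \<subseteq> V"
  shows "pos x (V - Y) \<in> fan_cones L x \<longleftrightarrow> V - Y \<in> L"
proof
  assume "pos x (V - Y) \<in> fan_cones L x"
  then obtain \<sigma> where s: "\<sigma> \<in> L" "pos x (V - Y) = pos x \<sigma>" unfolding fan_cones_def by blast
  then have "V - Y = \<sigma>" using face_of_pos[OF cf _ _ s(1)] fV by blast
  then show "V - Y \<in> L" using s by simp
qed (auto simp: fan_cones_def)




lemma qm_linear: "quotient_map_by p v \<Longrightarrow> linear p"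
  by (simp add: quotient_map_by_def)

lemma qm_zero: "quotient_map_by p v \<Longrightarrow> p v = 0"
proof -
  assume q: "quotient_map_by p v"
  have "v \<in> span {v}" by (rule span_base) simp
  then show ?thesis using q unfolding quotient_map_by_def by (metis (mono_tags, lifting) mem_Collect_eq)
qed

lemma qm_ker: "quotient_map_by p v \<Longrightarrow> p z = 0 \<Longrightarrow> \<exists>t. z = t *\<^sub>R v"
proof -
  assume q: "quotient_map_by p v" and z: "p z = 0"
  then have "z \<in> span {v}" unfolding quotient_map_by_def by (metis (mono_tags, lifting) mem_Collect_eq)
  then show ?thesis unfolding span_singleton by auto
qed

lemma proj_coface:
  assumes cf: "complete_fan L V x" and fV: "finite V" and v: "v \<in> V"
    and edges: "\<And>i. i \<in> V - {v} \<Longrightarrow> {v, i} \<in> L"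
    and q: "quotient_map_by p (x v)" and J: "J \<subseteq> V - {v}"
  shows "pos (p \<circ> x) J \<in> proj_cones p (fan_cones L x) (pos x {v}) \<longleftrightarrow> insert v J \<in> L"
proof
  have lin: "linear p" by (rule qm_linear[OF q])
  have pv: "(p \<circ> x) v = 0" using qm_zero[OF q] by simp
  have fJ: "finite J" using J fV by (meson Diff_subset finite_subset)
  have vJ: "v \<notin> J" using J by auto
  assume "pos (p \<circ> x) J \<in> proj_cones p (fan_cones L x) (pos x {v})"
  then obtain \<sigma> where s: "\<sigma> \<in> L" and sub: "pos x {v} \<subseteq> pos x \<sigma>" and im: "p ` pos x \<sigma> = pos (p \<circ> x) J"
    unfolding proj_cones_def fan_cones_def by auto
  have fs: "finite \<sigma>" by (rule cf_finite[OF cf s])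
  have "x v \<in> pos x \<sigma>" using sub pos_mem[of "{v}" v x] by auto
  then have vs: "v \<in> \<sigma>" by (rule face_sub[OF cf s v])
  have imS: "p ` pos x \<sigma> = pos (p \<circ> x) (\<sigma> - {v})"
    using pos_image[OF lin, of x \<sigma>] pos_drop_zero[of "p \<circ> x" v, OF pv fs] by (rule trans)
  have E: "pos (p \<circ> x) J = pos (p \<circ> x) (\<sigma> - {v})" using im imS by simp
  have J1: "J \<subseteq> \<sigma> - {v}"
  proof
    fix j assume jJ: "j \<in> J"
    have jv: "j \<noteq> v" and jV: "j \<in> V" using J jJ by auto
    have "(p \<circ> x) j \<in> p ` pos x \<sigma>" unfolding im by (rule pos_mem[OF fJ jJ])
    then obtain c where c: "c \<in> pos x \<sigma>" "p c = p (x j)" by auto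
    have "p (c - x j) = 0" using c lin by (simp add: linear_diff)
    then obtain t where t: "c - x j = t *\<^sub>R x v" using qm_ker[OF q] by blast
    define w where "w = x j + max t 0 *\<^sub>R x v"
    have ws: "w \<in> pos x \<sigma>"
    proof (cases "t \<ge> 0")
      case True
      then have "w = c" using t unfolding w_def by (simp add: algebra_simps)
      then show ?thesis using c by simp
    next
      case False
      then have w: "w = c + (- t) *\<^sub>R x v" using t unfolding w_def by (simp add: algebra_simps)
      have "(- t) *\<^sub>R x v \<in> pos x \<sigma>" using False by (intro pos_scale pos_mem[OF fs vs]) simp
      then show ?thesis unfolding w by (rule pos_add[OF c(1)])
    qed
    have we: "w \<in> pos x {v, j}" unfolding w_def
      by (intro pos_add pos_scale pos_mem) auto
    have ed: "{v, j} \<in> L" using edges jv jV by auto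
    have "w \<in> pos x ({v, j} \<inter> \<sigma>)" using cf_inter[OF cf ed s] ws we by auto
    show "j \<in> \<sigma> - {v}"
    proof (rule ccontr)
      assume "j \<notin> \<sigma> - {v}"
      then have "{v, j} \<inter> \<sigma> = {v}" using jv vs by auto
      then have "w \<in> pos x {v}" using \<open>w \<in> pos x ({v, j} \<inter> \<sigma>)\<close> by simp
      then obtain a where "w = a *\<^sub>R x v" unfolding pos_single by auto
      then have "x j = (\<Sum>i\<in>{v}. (a - max t 0) *\<^sub>R x i)" unfolding w_def by (simp add: algebra_simps)
      then show False using indep_contra[OF cf ed, of j "{v}" "\<lambda>_. a - max t 0"] jv by auto
    qed
  qed
  have J2: "\<sigma> - {v} \<subseteq> J"
  proof
    fix k assume k: "k \<in> \<sigma> - {v}"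
    have "(p \<circ> x) k \<in> pos (p \<circ> x) J" using E pos_mem[of "\<sigma> - {v}" k "p \<circ> x"] fs k by auto
    then obtain c where c: "(p \<circ> x) k = (\<Sum>i\<in>J. c i *\<^sub>R (p \<circ> x) i)" unfolding pos_iff by blast
    then have "p (x k - (\<Sum>i\<in>J. c i *\<^sub>R x i)) = 0"
      using lin by (simp add: linear_diff linear_sum linear_scale)
    then obtain t where t: "x k - (\<Sum>i\<in>J. c i *\<^sub>R x i) = t *\<^sub>R x v" using qm_ker[OF q] by blast
    show "k \<in> J"
    proof (rule ccontr)
      assume kJ: "k \<notin> J"
      let ?c = "c(v := t)"
      have "(\<Sum>i\<in>insert v J. ?c i *\<^sub>R x i) = t *\<^sub>R x v + (\<Sum>i\<in>J. ?c i *\<^sub>R x i)"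
        using fJ vJ by (simp add: sum.insert)
      also have "(\<Sum>i\<in>J. ?c i *\<^sub>R x i) = (\<Sum>i\<in>J. c i *\<^sub>R x i)"
        using vJ by (intro sum.cong) auto
      finally have "x k = (\<Sum>i\<in>insert v J. ?c i *\<^sub>R x i)" using t by (simp add: algebra_simps)
      moreover have "insert v J \<subseteq> \<sigma>" using J1 vs by auto
      moreover have "k \<notin> insert v J" using k kJ by auto
      ultimately show False using indep_contra[OF cf s, of k "insert v J" ?c] k by auto
    qed
  qed
  have "insert v J = \<sigma>" using J1 J2 vs by auto
  then show "insert v J \<in> L" using s by simp
next
  have lin: "linear p" by (rule qm_linear[OF q])
  have pv: "(p \<circ> x) v = 0" using qm_zero[OF q] by simp
  have fJ: "finite J" using J fV by (meson Diff_subset finite_subset)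
  have vJ: "v \<notin> J" using J by auto
  assume s: "insert v J \<in> L"
  have "pos x {v} \<subseteq> pos x (insert v J)" using fJ by (intro pos_mono) auto
  moreover have "p ` pos x (insert v J) = pos (p \<circ> x) J"
    using pos_image[OF lin, of x "insert v J"] pos_drop_zero[of "p \<circ> x" v "insert v J", OF pv] fJ vJ by simp
  ultimately show "pos (p \<circ> x) J \<in> proj_cones p (fan_cones L x) (pos x {v})"
    unfolding proj_cones_def fan_cones_def using s by blast
qed




lemma sum_drop_zero: fixes y :: "'i \<Rightarrow> 'a::real_vector" shows "y v = 0 \<Longrightarrow> finite J \<Longrightarrow> (\<Sum>j\<in>J. c j *\<^sub>R y j) = (\<Sum>j\<in>J-{v}. c j *\<^sub>R y j)"
  by (cases "v \<in> J") (simp_all add: sum.remove)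

lemma pos_subset_span: "pos y J \<subseteq> span (y ` J)"
proof
  fix z assume "z \<in> pos y J"
  then obtain c where z: "z = (\<Sum>j\<in>J. c j *\<^sub>R y j)" unfolding pos_iff by blast
  show "z \<in> span (y ` J)" unfolding z
    by (intro span_sum span_scale span_base) auto
qed

lemma proj_cover:
  fixes x :: "'i \<Rightarrow> 'a::euclidean_space" and p :: "'a \<Rightarrow> 'b::real_vector"
  assumes cf: "complete_fan L V x" and fV: "finite V" and v: "v \<in> V"
    and q: "quotient_map_by p (x v)"
  shows "\<Union> (proj_cones p (fan_cones L x) (pos x {v})) = UNIV"
proof -
  have lin: "linear p" by (rule qm_linear[OF q])
  have pv: "p (x v) = 0" by (rule qm_zero[OF q])
  have fL: "finite L"
  proof (rule finite_subset)
    show "L \<subseteq> Pow V" using cf_sub[OF cf] by blast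
  qed (use fV in simp)
  define B where "B = \<Union> ((\<lambda>\<sigma>. pos x \<sigma>) ` {\<sigma>\<in>L. x v \<notin> pos x \<sigma>})"
  have "closed B" unfolding B_def
    by (intro closed_Union) (use fL cf_finite[OF cf] pos_closed in auto)
  moreover have "x v \<notin> B" unfolding B_def by auto
  ultimately obtain e where e: "e > 0" "ball (x v) e \<subseteq> - B"
    using open_contains_ball[of "- B"] by (metis ComplI open_Compl)
  have "w \<in> \<Union> (proj_cones p (fan_cones L x) (pos x {v}))" for w
  proof -
    obtain z where z: "p z = w" using q unfolding quotient_map_by_def by (metis surjD)
    define \<delta> where "\<delta> = e / (2 * (norm z + 1))"
    have "0 < 2 * (norm z + 1)" by (smt (verit) norm_ge_zero)
    then have dpos: "\<delta> > 0" unfolding \<delta>_def using e by (intro divide_pos_pos)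
    define y where "y = x v + \<delta> *\<^sub>R z"
    have "\<delta> * norm z < e"
    proof -
      have "\<delta> * norm z \<le> \<delta> * (norm z + 1)" using dpos by simp
      also have "\<dots> = e / 2"
      proof -
        have nz: "norm z + 1 \<noteq> 0" by (smt (verit) norm_ge_zero)
        show ?thesis unfolding \<delta>_def using nz by (simp add: field_simps)
      qed
      finally show ?thesis using e by simp
    qed
    then have "dist (x v) y < e" unfolding y_def dist_norm using dpos by simp
    then have yB: "y \<notin> B" using e by auto
    obtain \<sigma> where s: "\<sigma> \<in> L" "y \<in> pos x \<sigma>" using cf_cover[OF cf] by blast
    have xs: "x v \<in> pos x \<sigma>" using yB s unfolding B_def by blast
    have sub: "pos x {v} \<subseteq> pos x \<sigma>" unfolding pos_single using xs pos_scale by blast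
    have "(1/\<delta>) *\<^sub>R y \<in> pos x \<sigma>" using s dpos by (intro pos_scale) auto
    moreover have "p ((1/\<delta>) *\<^sub>R y) = w"
      unfolding y_def using lin pv dpos z by (simp add: linear_add linear_scale)
    ultimately have "w \<in> p ` pos x \<sigma>" by (metis image_eqI)
    moreover have "p ` pos x \<sigma> \<in> proj_cones p (fan_cones L x) (pos x {v})"
      unfolding proj_cones_def fan_cones_def using s sub by blast
    ultimately show ?thesis by blast
  qed
  then show ?thesis by blast
qed




lemma lt_proj:
  fixes x :: "'i \<Rightarrow> 'a::euclidean_space" and p :: "'a \<Rightarrow> 'b::euclidean_space"
    and Xb :: "'i \<Rightarrow> 'c::euclidean_space"
  assumes lt: "linear_transform x V Xb" and v: "v \<in> V" and xv: "x v \<noteq> 0"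
    and q: "quotient_map_by p (x v)" and posU: "pos (p \<circ> x) (V - {v}) = UNIV"
  shows "linear_transform (p \<circ> x) (V - {v}) Xb"
proof -
  have lin: "linear p" by (rule qm_linear[OF q])
  have pv: "(p \<circ> x) v = 0" using qm_zero[OF q] by simp
  have fV: "finite V" using lt unfolding linear_transform_def by blast
  have "\<exists>b :: 'c \<Rightarrow> 'i \<Rightarrow> real.
        (\<forall>r\<in>Basis. b r \<in> dependencies x V) \<and>
        (\<forall>c :: 'c \<Rightarrow> real. (\<forall>i\<in>V. (\<Sum>r\<in>Basis. c r * b r i) = 0) \<longrightarrow> (\<forall>r\<in>Basis. c r = 0)) \<and>
        (\<forall>\<alpha>\<in>dependencies x V. \<exists>c :: 'c \<Rightarrow> real. \<forall>i\<in>V. \<alpha> i = (\<Sum>r\<in>Basis. c r * b r i)) \<and>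
        (\<forall>i\<in>V. Xb i = (\<Sum>r\<in>Basis. b r i *\<^sub>R r))"
    using lt unfolding linear_transform_def by (rule conjunct2[OF conjunct2])
  then obtain b :: "'c \<Rightarrow> 'i \<Rightarrow> real" where
    b1: "\<forall>r\<in>Basis. b r \<in> dependencies x V" and
    b2: "\<forall>c :: 'c \<Rightarrow> real. (\<forall>i\<in>V. (\<Sum>r\<in>Basis. c r * b r i) = 0) \<longrightarrow> (\<forall>r\<in>Basis. c r = 0)" and
    b3: "\<forall>\<alpha>\<in>dependencies x V. \<exists>c :: 'c \<Rightarrow> real. \<forall>i\<in>V. \<alpha> i = (\<Sum>r\<in>Basis. c r * b r i)" and
    b4: "\<forall>i\<in>V. Xb i = (\<Sum>r\<in>Basis. b r i *\<^sub>R r)"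
    by (elim exE conjE)
  have pxs: "(\<Sum>i\<in>J. a i *\<^sub>R (p \<circ> x) i) = p (\<Sum>i\<in>J. a i *\<^sub>R x i)" for a J
    using lin by (simp add: linear_sum linear_scale)
  have spanU: "span ((p \<circ> x) ` (V - {v})) = UNIV"
    using pos_subset_span[of "p \<circ> x" "V - {v}"] posU by auto
  have c1: "\<forall>r\<in>Basis. b r \<in> dependencies (p \<circ> x) (V - {v})"
  proof
    fix r :: 'c assume r: "r \<in> Basis"
    have "(\<Sum>i\<in>V - {v}. b r i *\<^sub>R (p \<circ> x) i) = (\<Sum>i\<in>V. b r i *\<^sub>R (p \<circ> x) i)"
      using sum_drop_zero[of "p \<circ> x" v V "b r", OF pv fV] by simp
    also have "\<dots> = p (\<Sum>i\<in>V. b r i *\<^sub>R x i)" by (rule pxs)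
    also have "(\<Sum>i\<in>V. b r i *\<^sub>R x i) = 0" using b1 r unfolding dependencies_def by blast
    finally show "b r \<in> dependencies (p \<circ> x) (V - {v})"
      unfolding dependencies_def using lin by (simp add: linear_0)
  qed
  have c2: "\<forall>c :: 'c \<Rightarrow> real. (\<forall>i\<in>V - {v}. (\<Sum>r\<in>Basis. c r * b r i) = 0) \<longrightarrow> (\<forall>r\<in>Basis. c r = 0)"
  proof (intro allI impI)
    fix c :: "'c \<Rightarrow> real" assume h: "\<forall>i\<in>V - {v}. (\<Sum>r\<in>Basis. c r * b r i) = 0"
    define \<alpha> where "\<alpha> i = (\<Sum>r\<in>Basis. c r * b r i)" for i
    have "(\<Sum>i\<in>V. \<alpha> i *\<^sub>R x i) = (\<Sum>i\<in>V. \<Sum>r\<in>Basis. (c r * b r i) *\<^sub>R x i)"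
      unfolding \<alpha>_def by (simp add: scaleR_sum_left)
    also have "\<dots> = (\<Sum>r\<in>Basis. \<Sum>i\<in>V. (c r * b r i) *\<^sub>R x i)" by (rule sum.swap)
    also have "\<dots> = (\<Sum>r\<in>Basis. c r *\<^sub>R (\<Sum>i\<in>V. b r i *\<^sub>R x i))"
      by (simp add: scaleR_sum_right)
    also have "\<dots> = 0" using b1 unfolding dependencies_def by simp
    finally have s0: "(\<Sum>i\<in>V. \<alpha> i *\<^sub>R x i) = 0" .
    have "(\<Sum>i\<in>V. \<alpha> i *\<^sub>R x i) = \<alpha> v *\<^sub>R x v + (\<Sum>i\<in>V - {v}. \<alpha> i *\<^sub>R x i)"
      using fV v by (rule sum.remove)
    also have "(\<Sum>i\<in>V - {v}. \<alpha> i *\<^sub>R x i) = 0" using h unfolding \<alpha>_def by simp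
    finally have "\<alpha> v = 0" using s0 xv by simp
    then have "\<forall>i\<in>V. (\<Sum>r\<in>Basis. c r * b r i) = 0" using h unfolding \<alpha>_def by auto
    then show "\<forall>r\<in>Basis. c r = 0" using b2 by blast
  qed
  have c3: "\<forall>\<alpha>\<in>dependencies (p \<circ> x) (V - {v}). \<exists>c :: 'c \<Rightarrow> real. \<forall>i\<in>V - {v}. \<alpha> i = (\<Sum>r\<in>Basis. c r * b r i)"
  proof
    fix \<alpha> assume "\<alpha> \<in> dependencies (p \<circ> x) (V - {v})"
    then have "p (\<Sum>i\<in>V - {v}. \<alpha> i *\<^sub>R x i) = 0" unfolding dependencies_def using pxs by simp
    then obtain t where t: "(\<Sum>i\<in>V - {v}. \<alpha> i *\<^sub>R x i) = t *\<^sub>R x v" using qm_ker[OF q] by blast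
    define \<alpha>' where "\<alpha>' = \<alpha>(v := - t)"
    have "(\<Sum>i\<in>V. \<alpha>' i *\<^sub>R x i) = \<alpha>' v *\<^sub>R x v + (\<Sum>i\<in>V - {v}. \<alpha>' i *\<^sub>R x i)"
      using fV v by (rule sum.remove)
    also have "(\<Sum>i\<in>V - {v}. \<alpha>' i *\<^sub>R x i) = (\<Sum>i\<in>V - {v}. \<alpha> i *\<^sub>R x i)"
      unfolding \<alpha>'_def by (intro sum.cong) auto
    finally have "\<alpha>' \<in> dependencies x V" unfolding dependencies_def using t by (simp add: \<alpha>'_def)
    then obtain c :: "'c \<Rightarrow> real" where cc: "\<forall>i\<in>V. \<alpha>' i = (\<Sum>r\<in>Basis. c r * b r i)" using b3 by blast
    have "\<forall>i\<in>V - {v}. \<alpha> i = (\<Sum>r\<in>Basis. c r * b r i)"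
    proof
      fix i assume i: "i \<in> V - {v}"
      then have "\<alpha>' i = \<alpha> i" unfolding \<alpha>'_def by simp
      then show "\<alpha> i = (\<Sum>r\<in>Basis. c r * b r i)" using cc i by simp
    qed
    then show "\<exists>c :: 'c \<Rightarrow> real. \<forall>i\<in>V - {v}. \<alpha> i = (\<Sum>r\<in>Basis. c r * b r i)" by blast
  qed
  have c4: "\<forall>i\<in>V - {v}. Xb i = (\<Sum>r\<in>Basis. b r i *\<^sub>R r)" using b4 by blast
  have fV': "finite (V - {v})" using fV by simp
  show ?thesis unfolding linear_transform_def
    by (intro conjI fV' spanU exI[of _ b] c1 c2 c3 c4)
qed




lemma relint_union2:
  fixes S T :: "'c::euclidean_space set"
  assumes "S \<noteq> {}" "T \<noteq> {}"
    and zS: "z \<in> rel_interior (convex hull S)" and zT: "z \<in> rel_interior (convex hull T)"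
  shows "z \<in> rel_interior (convex hull (S \<union> T))"
proof -
  define F where "F = (\<lambda>b::bool. if b then convex hull S else convex hull T)"
  have U: "\<Union> (F ` UNIV) = convex hull S \<union> convex hull T"
    unfolding F_def by (auto simp: UNIV_bool)
  have H: "convex hull (S \<union> T) = convex hull (\<Union> (F ` UNIV))"
    unfolding U by (metis hull_Un_left hull_Un_right)
  have "rel_interior (convex hull (\<Union> (F ` UNIV))) =
    {sum (\<lambda>i. c i *\<^sub>R s i) UNIV | c s. (\<forall>i\<in>UNIV. c i > 0) \<and> sum c UNIV = 1 \<and>
      (\<forall>i\<in>UNIV. s i \<in> rel_interior(F i))}"
    by (rule rel_interior_convex_hull_union) (use assms in \<open>auto simp: F_def\<close>)
  moreover have "z \<in> {sum (\<lambda>i. c i *\<^sub>R s i) UNIV | c s. (\<forall>i\<in>UNIV. c i > 0) \<and> sum c (UNIV::bool set) = 1 \<and>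
      (\<forall>i\<in>UNIV. s i \<in> rel_interior(F i))}"
  proof -
    have "z = sum (\<lambda>i. (\<lambda>_. 1/2) i *\<^sub>R (\<lambda>_. z) i) (UNIV::bool set)"
      by (simp add: UNIV_bool scaleR_add_left[symmetric])
    moreover have "(\<forall>i\<in>UNIV. (\<lambda>_. 1/2::real) i > 0) \<and> sum (\<lambda>_. 1/2::real) (UNIV::bool set) = 1 \<and>
      (\<forall>i\<in>UNIV. (\<lambda>_. z) i \<in> rel_interior(F i))"
      using zS zT by (auto simp: F_def UNIV_bool)
    ultimately show ?thesis
      by (intro CollectI exI[where x="\<lambda>_. 1/2::real"] exI[where x="\<lambda>_. z"] conjI) simp_all
  qed
  ultimately show ?thesis using H by simp
qed

lemma proj_shephard:
  fixes x :: "'i \<Rightarrow> 'a::euclidean_space" and p :: "'a \<Rightarrow> 'b::euclidean_space"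
    and Xh :: "'i \<Rightarrow> 'c::euclidean_space"
  assumes cf: "complete_fan L V x" and fV: "finite V" and v: "v \<in> V"
    and edges: "\<And>i. i \<in> V - {v} \<Longrightarrow> {v, i} \<in> L"
    and q: "quotient_map_by p (x v)"
    and sh: "shephard_diagram_for_fan (fan_cones L x) V x Xh"
  shows "shephard_diagram_for_fan (proj_cones p (fan_cones L x) (pos x {v})) (V - {v}) (p \<circ> x) Xh"
proof -
  have lin: "linear p" by (rule qm_linear[OF q])
  have pv: "(p \<circ> x) v = 0" using qm_zero[OF q] by simp
  have sd: "shephard_diagram x V Xh" using sh unfolding shephard_diagram_for_fan_def by blast
  have posV: "pos x V = UNIV" using sd unfolding shephard_diagram_def by blast
  have "\<exists>Xb. linear_transform x V Xb \<and>
        (\<exists>u d. u \<noteq> 0 \<and> d \<noteq> 0 \<and>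
           (\<forall>i\<in>V. inner u (Xh i) = d \<and> (\<exists>a>0. Xh i = a *\<^sub>R Xb i)))"
    using sd unfolding shephard_diagram_def by (rule conjunct2[OF conjunct2])
  then obtain Xb :: "'i \<Rightarrow> 'c" and u d where lt: "linear_transform x V Xb" and ud: "u \<noteq> 0" "d \<noteq> 0"
    and hp: "\<forall>i\<in>V. inner u (Xh i) = d \<and> (\<exists>a>0. Xh i = a *\<^sub>R Xb i)"
    by (elim exE conjE)
  have "pos (p \<circ> x) (V - {v}) = pos (p \<circ> x) V" using pos_drop_zero[of "p \<circ> x" v V, OF pv fV] by simp
  also have "\<dots> = p ` pos x V" using pos_image[OF lin, of x V] by simp
  also have "\<dots> = UNIV" using posV q unfolding quotient_map_by_def by simp
  finally have posU: "pos (p \<circ> x) (V - {v}) = UNIV" .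
  have lt': "linear_transform (p \<circ> x) (V - {v}) Xb"
    by (rule lt_proj[OF lt v cf_nonzero[OF cf v] q posU])
  have sd': "shephard_diagram (p \<circ> x) (V - {v}) Xh"
    unfolding shephard_diagram_def
  proof (intro conjI exI)
    show "finite (V - {v})" using fV by simp
    show "pos (p \<circ> x) (V - {v}) = UNIV" by (rule posU)
    show "linear_transform (p \<circ> x) (V - {v}) Xb" by (rule lt')
    show "u \<noteq> 0" "d \<noteq> 0" by (rule ud(1), rule ud(2))
    show "\<forall>i\<in>V - {v}. inner u (Xh i) = d \<and> (\<exists>a>0. Xh i = a *\<^sub>R Xb i)" using hp by blast
  qed
  have cones: "\<forall>i\<in>V - {v}. (p \<circ> x) i \<noteq> 0 \<and> pos (p \<circ> x) {i} \<in> proj_cones p (fan_cones L x) (pos x {v})"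
  proof
    fix i assume i: "i \<in> V - {v}"
    have ed: "{v, i} \<in> L" by (rule edges[OF i])
    have "pos (p \<circ> x) {i} \<in> proj_cones p (fan_cones L x) (pos x {v})"
      using proj_coface[OF cf fV v edges q, of "{i}"] i ed by simp
    moreover have "(p \<circ> x) i \<noteq> 0"
    proof
      assume "(p \<circ> x) i = 0"
      then obtain t where "x i = t *\<^sub>R x v" using qm_ker[OF q] by auto
      then have "x i = (\<Sum>j\<in>{v}. (\<lambda>_. t) j *\<^sub>R x j)" by simp
      then show False using indep_contra[OF cf ed, of i "{v}" "\<lambda>_. t"] i by auto
    qed
    ultimately show "(p \<circ> x) i \<noteq> 0 \<and> pos (p \<circ> x) {i} \<in> proj_cones p (fan_cones L x) (pos x {v})" by blast
  qed
  show ?thesis unfolding shephard_diagram_for_fan_def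
    by (intro conjI proj_cover[OF cf fV v q] cones sd')
qed

lemma S_fan:
  assumes cf: "complete_fan L V x" and fV: "finite V"
  shows "S_set (fan_cones L x) V x Xh = \<Inter> {rel_interior (convex hull (Xh ` Y)) | Y. Y \<subseteq> V \<and> V - Y \<in> L}"
  unfolding S_set_def
  by (intro arg_cong[where f=Inter] Collect_cong) (auto simp: coface_iff[OF cf fV])

lemma S_proj:
  assumes cf: "complete_fan L V x" and fV: "finite V" and v: "v \<in> V"
    and edges: "\<And>i. i \<in> V - {v} \<Longrightarrow> {v, i} \<in> L"
    and q: "quotient_map_by p (x v)"
  shows "S_set (proj_cones p (fan_cones L x) (pos x {v})) (V - {v}) (p \<circ> x) Xh
    = \<Inter> {rel_interior (convex hull (Xh ` Y)) | Y. Y \<subseteq> V - {v} \<and> V - Y \<in> L}"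
proof -
  have e: "pos (p \<circ> x) ((V - {v}) - Y) \<in> proj_cones p (fan_cones L x) (pos x {v}) \<longleftrightarrow> V - Y \<in> L"
    if Y: "Y \<subseteq> V - {v}" for Y
  proof -
    have "insert v ((V - {v}) - Y) = V - Y" using Y v by auto
    then show ?thesis using proj_coface[OF cf fV v edges q, of "(V - {v}) - Y"] by auto
  qed
  show ?thesis unfolding S_set_def
    by (intro arg_cong[where f=Inter] Collect_cong) (auto simp: e)
qed




lemma wedge_cases:
  "\<sigma> \<in> wedge K v a b \<Longrightarrow> \<exists>A \<tau>. \<sigma> = A \<union> \<tau> \<and> A \<subseteq> {a, b} \<and> \<tau> \<in> K \<and> v \<notin> \<tau>"
  unfolding wedge_def sc_join_def edge_simplex_def edge_boundary_def sc_link_def sc_delete_def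
  by auto

lemma wedge_bd: "A \<subseteq> {a, b} \<Longrightarrow> card A \<le> 1 \<Longrightarrow> \<tau> \<in> K \<Longrightarrow> v \<notin> \<tau> \<Longrightarrow> A \<union> \<tau> \<in> wedge K v a b"
  unfolding wedge_def sc_join_def edge_simplex_def edge_boundary_def sc_link_def sc_delete_def
  by blast

lemma wedge_top: "\<tau> \<in> K \<Longrightarrow> v \<notin> \<tau> \<Longrightarrow> insert v \<tau> \<in> K \<Longrightarrow> {a, b} \<union> \<tau> \<in> wedge K v a b"
  unfolding wedge_def sc_join_def edge_simplex_def edge_boundary_def sc_link_def sc_delete_def
  by blast

theorem proposition5p9:
  fixes K :: "nat set set" and m :: nat
    and x :: "nat \<Rightarrow> 'a::euclidean_space"
    and Xh :: "nat \<Rightarrow> 'c::euclidean_space"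
    and p0 :: "'a \<Rightarrow> 'b::euclidean_space"
    and p1 :: "'a \<Rightarrow> 'd::euclidean_space"
  assumes K_fan_like: "fan_like_sphere TYPE('k::euclidean_space) K {1..m}"
    and Sigma: "complete_fan (wedge K 1 0 1) {0..m} x"
    and shephard: "shephard_diagram_for_fan (fan_cones (wedge K 1 0 1) x) {0..m} x Xh"
    and p0: "quotient_map_by p0 (x 0)"
    and p1: "quotient_map_by p1 (x 1)"
  shows "shephard_diagram_for_fan (proj_cones p0 (fan_cones (wedge K 1 0 1) x) (pos x {0}))
           {1..m} (p0 \<circ> x) Xh
       \<and> shephard_diagram_for_fan (proj_cones p1 (fan_cones (wedge K 1 0 1) x) (pos x {1}))
           ({0..m} - {1}) (p1 \<circ> x) Xh
       \<and> S_set (fan_cones (wedge K 1 0 1) x) {0..m} x Xh =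
           S_set (proj_cones p0 (fan_cones (wedge K 1 0 1) x) (pos x {0})) {1..m} (p0 \<circ> x) Xh
           \<inter> S_set (proj_cones p1 (fan_cones (wedge K 1 0 1) x) (pos x {1})) ({0..m} - {1}) (p1 \<circ> x) Xh"
proof -
  let ?L = "wedge K 1 0 1"
  let ?V = "{0..m} :: nat set"
  have scK: "simplicial_complex K {1..m}" using K_fan_like unfolding fan_like_sphere_def by blast
  have Kdown: "\<And>\<sigma> \<tau>. \<sigma> \<in> K \<Longrightarrow> \<tau> \<subseteq> \<sigma> \<Longrightarrow> \<tau> \<in> K"
    using scK unfolding simplicial_complex_def by blast
  have Ksing: "\<And>i. i \<in> {1..m} \<Longrightarrow> {i} \<in> K"
    using scK unfolding simplicial_complex_def by blast
  have fV: "finite ?V" by simp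
  obtain \<sigma>0 where "\<sigma>0 \<in> ?L" using cf_cover[OF Sigma] by blast
  then obtain \<tau> where "\<tau> \<in> K" using wedge_cases[of \<sigma>0 K 1 0 1] by blast
  then have emK: "{} \<in> K" using Kdown by blast
  have "{1} \<union> {} \<in> ?L" by (rule wedge_bd) (use emK in auto)
  then have "{1::nat} \<subseteq> ?V" using cf_sub[OF Sigma, of "{1}"] by simp
  then have m1: "1 \<le> m" by simp
  have K1: "{1} \<in> K" using Ksing m1 by simp
  have e01: "{0, 1} \<in> ?L" using wedge_top[of "{}" K 1 0 1] emK K1 by simp
  have edges0: "\<And>i. i \<in> ?V - {0} \<Longrightarrow> {0, i} \<in> ?L"
  proof -
    fix i assume i: "i \<in> ?V - {0}"
    show "{0, i} \<in> ?L"
    proof (cases "i = 1")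
      case True then show ?thesis using e01 by simp
    next
      case False
      then have "{i} \<in> K" using Ksing i by simp
      then have "{0} \<union> {i} \<in> ?L" using False by (intro wedge_bd) auto
      then show ?thesis by (simp add: insert_commute)
    qed
  qed
  have edges1: "\<And>i. i \<in> ?V - {1} \<Longrightarrow> {1, i} \<in> ?L"
  proof -
    fix i assume i: "i \<in> ?V - {1}"
    show "{1, i} \<in> ?L"
    proof (cases "i = 0")
      case True then show ?thesis using e01 by (simp add: insert_commute)
    next
      case False
      then have "{i} \<in> K" using Ksing i by simp
      then have "{1} \<union> {i} \<in> ?L" using i by (intro wedge_bd) auto
      then show ?thesis by (simp add: insert_commute)
    qed
  qed
  have v0: "(0::nat) \<in> ?V" by simp
  have v1: "(1::nat) \<in> ?V" using m1 by simp
  have V0: "{1..m} = ?V - {0}" by auto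
  have sh0: "shephard_diagram_for_fan (proj_cones p0 (fan_cones ?L x) (pos x {0})) (?V - {0}) (p0 \<circ> x) Xh"
    by (rule proj_shephard[OF Sigma fV v0 edges0 p0 shephard])
  have sh1: "shephard_diagram_for_fan (proj_cones p1 (fan_cones ?L x) (pos x {1})) (?V - {1}) (p1 \<circ> x) Xh"
    by (rule proj_shephard[OF Sigma fV v1 edges1 p1 shephard])
  define R where "R Y = rel_interior (convex hull (Xh ` Y))" for Y
  have SF: "S_set (fan_cones ?L x) ?V x Xh = \<Inter> {R Y | Y. Y \<subseteq> ?V \<and> ?V - Y \<in> ?L}"
    unfolding R_def by (rule S_fan[OF Sigma fV])
  have S0: "S_set (proj_cones p0 (fan_cones ?L x) (pos x {0})) (?V - {0}) (p0 \<circ> x) Xh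
      = \<Inter> {R Y | Y. Y \<subseteq> ?V - {0} \<and> ?V - Y \<in> ?L}"
    unfolding R_def by (rule S_proj[OF Sigma fV v0 edges0 p0])
  have S1: "S_set (proj_cones p1 (fan_cones ?L x) (pos x {1})) (?V - {1}) (p1 \<circ> x) Xh
      = \<Inter> {R Y | Y. Y \<subseteq> ?V - {1} \<and> ?V - Y \<in> ?L}"
    unfolding R_def by (rule S_proj[OF Sigma fV v1 edges1 p1])
  have Seq: "\<Inter> {R Y | Y. Y \<subseteq> ?V \<and> ?V - Y \<in> ?L} =
      \<Inter> {R Y | Y. Y \<subseteq> ?V - {0} \<and> ?V - Y \<in> ?L} \<inter> \<Inter> {R Y | Y. Y \<subseteq> ?V - {1} \<and> ?V - Y \<in> ?L}"
  proof
    show "\<Inter> {R Y | Y. Y \<subseteq> ?V \<and> ?V - Y \<in> ?L} \<subseteq>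
      \<Inter> {R Y | Y. Y \<subseteq> ?V - {0} \<and> ?V - Y \<in> ?L} \<inter> \<Inter> {R Y | Y. Y \<subseteq> ?V - {1} \<and> ?V - Y \<in> ?L}"
      by blast
    show "\<Inter> {R Y | Y. Y \<subseteq> ?V - {0} \<and> ?V - Y \<in> ?L} \<inter> \<Inter> {R Y | Y. Y \<subseteq> ?V - {1} \<and> ?V - Y \<in> ?L}
      \<subseteq> \<Inter> {R Y | Y. Y \<subseteq> ?V \<and> ?V - Y \<in> ?L}"
    proof
      fix z assume z: "z \<in> \<Inter> {R Y | Y. Y \<subseteq> ?V - {0} \<and> ?V - Y \<in> ?L} \<inter> \<Inter> {R Y | Y. Y \<subseteq> ?V - {1} \<and> ?V - Y \<in> ?L}"
      have z0: "\<And>Y. Y \<subseteq> ?V - {0} \<Longrightarrow> ?V - Y \<in> ?L \<Longrightarrow> z \<in> R Y" using z by blast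
      have z1: "\<And>Y. Y \<subseteq> ?V - {1} \<Longrightarrow> ?V - Y \<in> ?L \<Longrightarrow> z \<in> R Y" using z by blast
      have "z \<in> R Y" if Y: "Y \<subseteq> ?V" "?V - Y \<in> ?L" for Y
      proof (cases "0 \<in> Y \<and> 1 \<in> Y")
        case False
        then consider "0 \<notin> Y" | "1 \<notin> Y" by blast
        then show ?thesis
        proof cases
          assume "0 \<notin> Y" then show ?thesis using z0 Y by blast
        next
          assume "1 \<notin> Y" then show ?thesis using z1 Y by blast
        qed
      next
        case True
        obtain A \<tau> where At: "?V - Y = A \<union> \<tau>" "A \<subseteq> {0, 1}" "\<tau> \<in> K" "1 \<notin> \<tau>"
          using wedge_cases[OF Y(2)] by blast
        have A0: "A = {}" using At True by auto
        have t: "?V - Y = \<tau>" using At A0 by simp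
        have "{0} \<union> \<tau> \<in> ?L" using At by (intro wedge_bd) auto
        moreover have "?V - (Y - {0}) = {0} \<union> \<tau>" using t True by auto
        ultimately have a: "z \<in> R (Y - {0})" using z0[of "Y - {0}"] Y by auto
        have "{1} \<union> \<tau> \<in> ?L" using At by (intro wedge_bd) auto
        moreover have "?V - (Y - {1}) = {1} \<union> \<tau>" using t True m1 by auto
        ultimately have b: "z \<in> R (Y - {1})" using z1[of "Y - {1}"] Y by auto
        have "z \<in> rel_interior (convex hull (Xh ` (Y - {0}) \<union> Xh ` (Y - {1})))"
          by (rule relint_union2) (use a b True in \<open>auto simp: R_def\<close>)
        moreover have "Xh ` (Y - {0}) \<union> Xh ` (Y - {1}) = Xh ` Y" by auto
        ultimately show ?thesis unfolding R_def by simp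
      qed
      then show "z \<in> \<Inter> {R Y | Y. Y \<subseteq> ?V \<and> ?V - Y \<in> ?L}" by blast
    qed
  qed
  show ?thesis unfolding V0 using sh0 sh1 SF S0 S1 Seq by simp
qed


end
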